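(* Let $n,p\ge1$ be integers and let $\mathbf{A}^{p+1}_{n+1}$ be as defined in the context. Then: (a) for every $a\in A$, $a\vee\sim(a^p)\ge\langle(0,0),p\rangle$ (i.e. $a\vee\sim(a^p)\in\mathrm{Rad}(\mathbf{A}^{p+1}_{n+1})={\uparrow}\langle(0,0),p\rangle$); (b) if $p\le n$, then for every $a\in A$: $a\not\ge\langle(0,0),p\rangle$ if and only if $a^{n+1}=\bot$; (c) if $n<p$, then $\langle(n-1,0),p-1\rangle^{p-1}=\sim\langle(n-1,0),p-1\rangle$, and for every $a\in A$: $a\not\ge\langle(0,0),p\rangle$ if and only if $a^{p}=\bot$.
   Context: Order $\mathbb{Z}\times\mathbb{Z}$ lexicographically: $(m,r)\preccurlyeq(k,s)$ iff $m<k$, or $m=k$ and $r\le s$; addition/subtraction of pairs is componentwise, and $\min,\max$ of pairs refer to $\preccurlyeq$. For an integer $n\ge1$ let $L^\omega_{n+1}=\{(m,r)\in\mathbb{Z}^2:(0,0)\preccurlyeq(m,r)\preccurlyeq(n,0)\}$ with $x\ast y=\max\{(0,0),x+y-(n,0)\}$ and $x\to y=\min\{(n,0),(n,0)-x+y\}$. For an integer $p\ge1$ let $L_{p+1}=\{0,1,\dots,p\}$ with $\alpha\ast\beta=\max\{0,\alpha+\beta-p\}$. Define $$A=A^{p+1}_{n+1}=\{\langle(m,r),\alpha\rangle:(m,r)\in L^\omega_{n+1},\ \alpha\in\{0,p\}\}\cup\{\langle(m,r),\alpha\rangle:(0,0)\preccurlyeq(m,r)\preccurlyeq(n-1,0),\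 0<\alpha<p\}.$$ Order: $\langle(m,r),\alpha\rangle\le\langle(k,s),\beta\rangle$ iff one of: (o1) $\alpha\neq0$, $\alpha\le\beta$ and $(m,r)\preccurlyeq(k,s)$; (o2) $\alpha=\beta=0$ and $(k,s)\preccurlyeq(m,r)$; (o3) $\alpha=0$, $\beta\ne0$ and $(n-1,0)\preccurlyeq(m+k,r+s)$. $\wedge,\vee$ denote meet and join for $\le$. Put $\bot=\langle(n,0),0\rangle$, $\top=\langle(n,0),p\rangle$. For $a=\langle(m,r),\alpha\rangle$, $b=\langle(k,s),\beta\rangle\in A$ define $a\odot b$ by: (P1) if $\alpha,\beta\ge1$ and $\alpha+\beta>p$: $a\odot b=\langle(m,r)\ast(k,s),\alpha+\beta-p\rangle$; (P2) if $\alpha,\beta\ge1$ and $\alpha+\beta\le p$: $a\odot b=\langle\min\{(n,0),(2n-(m+k+1),-(r+s))\},0\rangle$; (P3) if $\alpha\ge1$, $\beta=0$: $a\odot b=\langle(m,r)\to(k,s),0\rangle$, and if $\alpha=0$, $\beta\ge1$: $a\odot b=\langle(k,s)\to(m,r),0\rangle$; (P4) if $\alpha=\beta=0$: $a\odot b=\langle\min\{(n,0),(m+k+1,r+s)\},0\rangle$. Define $\sim\langle(m,r),\alpha\rangle=\langle(m,r),p-\alpha\rangle$ if $\alpha\in\{0,p\}$, and $\sim\langle(m,r),\alpha\rangle=\langle(n-1-m,-r),p-\alpha\rangle$ if $0<\alpha<p$. Define $a\Rightarrow b=\sim(a\odot\sim b)$. The algebra $\mathbf{A}^{p+1}_{n+1}$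 is $\langle A;\odot,\Rightarrow,\wedge,\vee,\bot,\top\rangle$. Powers: $a^0=\top$, $a^{k+1}=a\odot a^k$. $\mathrm{Rad}$ denotes the intersection of the maximal proper implicative filters (subsets containing $\top$, closed under $\odot$, upward closed, different from $A$). *)

theory Defs
  imports Main
begin

type_synonym pr = "int \<times> int"
type_synonym elt = "pr \<times> int"

definition lexle :: "pr \<Rightarrow> pr \<Rightarrow> bool" where
  "lexle x y \<longleftrightarrow> fst x < fst y \<or> (fst x = fst y \<and> snd x \<le> snd y)"

definition lmin :: "pr \<Rightarrow> pr \<Rightarrow> pr" where
  "lmin x y = (if lexle x y then x else y)"

definition lmax :: "pr \<Rightarrow> pr \<Rightarrow> pr" where
  "lmax x y = (if lexle x y then y else x)"

definition padd :: "pr \<Rightarrow> pr \<Rightarrow> pr" where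
  "padd x y = (fst x + fst y, snd x + snd y)"

definition psub :: "pr \<Rightarrow> pr \<Rightarrow> pr" where
  "psub x y = (fst x - fst y, snd x - snd y)"

definition lstar :: "nat \<Rightarrow> pr \<Rightarrow> pr \<Rightarrow> pr" where
  "lstar n x y = lmax (0,0) (psub (padd x y) (int n, 0))"

definition limp :: "nat \<Rightarrow> pr \<Rightarrow> pr \<Rightarrow> pr" where
  "limp n x y = lmin (int n, 0) (padd (psub (int n, 0) x) y)"

definition Acar :: "nat \<Rightarrow> nat \<Rightarrow> elt set" where
  "Acar n p =
     {((m,r),\<alpha>). lexle (0,0) (m,r) \<and> lexle (m,r) (int n, 0) \<and> (\<alpha> = 0 \<or> \<alpha> = int p)}
   \<union> {((m,r),\<alpha>). lexle (0,0) (m,r) \<and> lexle (m,r) (int n - 1, 0) \<and> 0 < \<alpha> \<and> \<alpha> < int p}"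

definition leA :: "nat \<Rightarrow> nat \<Rightarrow> elt \<Rightarrow> elt \<Rightarrow> bool" where
  "leA n p a b = (case a of ((m,r),\<alpha>) \<Rightarrow> case b of ((k,s),\<beta>) \<Rightarrow>
      (\<alpha> \<noteq> 0 \<and> \<alpha> \<le> \<beta> \<and> lexle (m,r) (k,s))
    \<or> (\<alpha> = 0 \<and> \<beta> = 0 \<and> lexle (k,s) (m,r))
    \<or> (\<alpha> = 0 \<and> \<beta> \<noteq> 0 \<and> lexle (int n - 1, 0) (m + k, r + s)))"

definition joinA :: "nat \<Rightarrow> nat \<Rightarrow> elt \<Rightarrow> elt \<Rightarrow> elt" where
  "joinA n p a b = (THE c. c \<in> Acar n p \<and> leA n p a c \<and> leA n p b c \<and>
      (\<forall>d \<in> Acar n p. leA n p a d \<and> leA n p b d \<longrightarrow> leA n p c d))"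

definition botA :: "nat \<Rightarrow> nat \<Rightarrow> elt" where
  "botA n p = ((int n, 0), 0)"

definition topA :: "nat \<Rightarrow> nat \<Rightarrow> elt" where
  "topA n p = ((int n, 0), int p)"

definition odot :: "nat \<Rightarrow> nat \<Rightarrow> elt \<Rightarrow> elt \<Rightarrow> elt" where
  "odot n p a b = (case a of ((m,r),\<alpha>) \<Rightarrow> case b of ((k,s),\<beta>) \<Rightarrow>
     if \<alpha> \<ge> 1 \<and> \<beta> \<ge> 1 \<and> \<alpha> + \<beta> > int p then (lstar n (m,r) (k,s), \<alpha> + \<beta> - int p)
     else if \<alpha> \<ge> 1 \<and> \<beta> \<ge> 1 then
       (lmin (int n, 0) (2 * int n - (m + k + 1), - (r + s)), 0)
     else if \<alpha> \<ge> 1 \<and> \<beta> = 0 then (limp n (m,r) (k,s), 0)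
     else if \<alpha> = 0 \<and> \<beta> \<ge> 1 then (limp n (k,s) (m,r), 0)
     else (lmin (int n, 0) (m + k + 1, r + s), 0))"

definition tildeA :: "nat \<Rightarrow> nat \<Rightarrow> elt \<Rightarrow> elt" where
  "tildeA n p a = (case a of ((m,r),\<alpha>) \<Rightarrow>
     if \<alpha> = 0 \<or> \<alpha> = int p then ((m,r), int p - \<alpha>)
     else ((int n - 1 - m, - r), int p - \<alpha>))"

definition impA :: "nat \<Rightarrow> nat \<Rightarrow> elt \<Rightarrow> elt \<Rightarrow> elt" where
  "impA n p a b = tildeA n p (odot n p a (tildeA n p b))"

fun powA :: "nat \<Rightarrow> nat \<Rightarrow> elt \<Rightarrow> nat \<Rightarrow> elt" where
  "powA n p a 0 = topA n p"
| "powA n p a (Suc k) = odot n p a (powA n p a k)"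

end

theory Submission imports Defs begin
lemma lexle_simp[simp]: "lexle (a,b) (c,d) \<longleftrightarrow> a < c \<or> (a = c \<and> b \<le> d)"
  by (simp add: lexle_def)
lemma lmin_simp[simp]: "lmin (a,b) (c,d) = (if a < c \<or> (a = c \<and> b \<le> d) then (a,b) else (c,d))"
  by (simp add: lmin_def)
lemma lmax_simp[simp]: "lmax (a,b) (c,d) = (if a < c \<or> (a = c \<and> b \<le> d) then (c,d) else (a,b))"
  by (simp add: lmax_def)
lemma leA_simp[simp]: "leA n p ((m,r),\<alpha>) ((k,s),\<beta>) \<longleftrightarrow>
      (\<alpha> \<noteq> 0 \<and> \<alpha> \<le> \<beta> \<and> lexle (m,r) (k,s))
    \<or> (\<alpha> = 0 \<and> \<beta> = 0 \<and> lexle (k,s) (m,r))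
    \<or> (\<alpha> = 0 \<and> \<beta> \<noteq> 0 \<and> lexle (int n - 1, 0) (m + k, r + s))"
  by (simp add: leA_def)

lemma P1: "1 \<le> \<alpha> \<Longrightarrow> 1 \<le> \<beta> \<Longrightarrow> int p < \<alpha> + \<beta> \<Longrightarrow>
   odot n p ((m,r),\<alpha>) ((k,s),\<beta>) = (lmax (0,0) (m + k - int n, r + s), \<alpha> + \<beta> - int p)"
  by (simp add: odot_def lstar_def padd_def psub_def del: lmax_simp lmin_simp)
lemma P2: "1 \<le> \<alpha> \<Longrightarrow> 1 \<le> \<beta> \<Longrightarrow> \<alpha> + \<beta> \<le> int p \<Longrightarrow>
   odot n p ((m,r),\<alpha>) ((k,s),\<beta>) = (lmin (int n, 0) (2 * int n - (m + k + 1), - (r + s)), 0)"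
  by (simp add: odot_def del: lmax_simp lmin_simp)
lemma P3a: "1 \<le> \<alpha> \<Longrightarrow>
   odot n p ((m,r),\<alpha>) ((k,s),0) = (lmin (int n, 0) (int n - m + k, s - r), 0)"
  by (simp add: odot_def limp_def padd_def psub_def del: lmax_simp lmin_simp)
lemma P3b: "1 \<le> \<beta> \<Longrightarrow>
   odot n p ((m,r),0) ((k,s),\<beta>) = (lmin (int n, 0) (int n - k + m, r - s), 0)"
  by (simp add: odot_def limp_def padd_def psub_def del: lmax_simp lmin_simp)
lemma P4: "odot n p ((m,r),0) ((k,s),0) = (lmin (int n, 0) (m + k + 1, r + s), 0)"
  by (simp add: odot_def del: lmax_simp lmin_simp)

lemma odot_comm: "odot n p a b = odot n p b a"
proof -
  obtain m r \<alpha> k s \<beta> where a: "a = ((m,r),\<alpha>)" and b: "b = ((k,s),\<beta>)" by (metis prod.collapse)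
  show ?thesis unfolding a b
    by (cases "1 \<le> \<alpha>"; cases "1 \<le> \<beta>"; cases "int p < \<alpha> + \<beta>"; cases "\<alpha> = 0"; cases "\<beta> = 0")
       (simp_all add: odot_def lstar_def padd_def psub_def add_ac del: lmax_simp lmin_simp)
qed

lemma Acar_iff: "((m,r),\<alpha>) \<in> Acar n p \<longleftrightarrow>
   (0 < m \<or> (m = 0 \<and> 0 \<le> r)) \<and> (m < int n \<or> (m = int n \<and> r \<le> 0)) \<and> 0 \<le> \<alpha> \<and> \<alpha> \<le> int p \<and>
   (0 < \<alpha> \<and> \<alpha> < int p \<longrightarrow> (m < int n - 1 \<or> (m = int n - 1 \<and> r \<le> 0)))"
  unfolding Acar_def by auto

lemma odot_closed0:
  assumes "((m,r),\<alpha>) \<in> Acar n p" "((k,s),\<beta>) \<in> Acar n p"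
  shows "odot n p ((m,r),\<alpha>) ((k,s),\<beta>) \<in> Acar n p"
proof -
  define N where "N = int n"
  define P where "P = int p"
  show ?thesis
  using assms
    apply (cases "\<alpha> = 0"; cases "\<beta> = 0"; cases "int p < \<alpha> + \<beta>")
    apply (simp_all add: P1 P2 P3a P3b P4 Acar_iff flip: N_def P_def)
    apply (smt (z3))+
    done
qed


lemma odot_closed:
  assumes "a \<in> Acar n p" "b \<in> Acar n p"
  shows "odot n p a b \<in> Acar n p"
  using assms odot_closed0 by (metis prod.collapse)

lemma leA_trans0:
  assumes "((m,r),\<alpha>) \<in> Acar n p" "((k,s),\<beta>) \<in> Acar n p" "((u,v),\<gamma>) \<in> Acar n p"
    and "leA n p ((m,r),\<alpha>) ((k,s),\<beta>)" "leA n p ((k,s),\<beta>) ((u,v),\<gamma>)"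
  shows "leA n p ((m,r),\<alpha>) ((u,v),\<gamma>)"
proof -
  define N where "N = int n"
  define P where "P = int p"
  show ?thesis
  using assms
    apply (simp_all add: Acar_iff flip: N_def P_def)
    apply (smt (z3))
    done
qed

lemma leA_trans:
  assumes "a \<in> Acar n p" "b \<in> Acar n p" "c \<in> Acar n p" "leA n p a b" "leA n p b c"
  shows "leA n p a c"
  using assms leA_trans0 by (metis prod.collapse)

lemma leA_antisym0:
  assumes "((m,r),\<alpha>) \<in> Acar n p" "((k,s),\<beta>) \<in> Acar n p"
    and "leA n p ((m,r),\<alpha>) ((k,s),\<beta>)" "leA n p ((k,s),\<beta>) ((m,r),\<alpha>)"
  shows "((m,r),\<alpha>) = ((k,s),\<beta>)"
proof -
  define N where "N = int n"
  define P where "P = int p"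
  show ?thesis
  using assms
    apply (simp_all add: Acar_iff flip: N_def P_def)
    apply (smt (z3))
    done
qed

lemma leA_antisym:
  assumes "a \<in> Acar n p" "b \<in> Acar n p" "leA n p a b" "leA n p b a"
  shows "a = b"
  using assms leA_antisym0 by (metis prod.collapse)

lemma mono0:
  assumes "((m,r),\<alpha>) \<in> Acar n p" "((k,s),\<beta>) \<in> Acar n p" "((u,v),\<gamma>) \<in> Acar n p"
    and "leA n p ((m,r),\<alpha>) ((k,s),\<beta>)"
  shows "leA n p (odot n p ((m,r),\<alpha>) ((u,v),\<gamma>)) (odot n p ((k,s),\<beta>) ((u,v),\<gamma>))"
proof -
  define N where "N = int n"
  define P where "P = int p"
  show ?thesis
  using assms
    apply (cases "\<alpha> = 0"; cases "\<beta> = 0"; cases "\<gamma> = 0"; cases "int p < \<alpha> + \<gamma>"; cases "int p < \<beta> + \<gamma>")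
    apply (simp_all add: P1 P2 P3a P3b P4 Acar_iff flip: N_def P_def)
    apply (smt (z3))+
    done
qed


lemma leA_refl0:
  assumes "((m,r),\<alpha>) \<in> Acar n p"
  shows "leA n p ((m,r),\<alpha>) ((m,r),\<alpha>)"
  using assms by (simp add: Acar_iff)

lemma leA_refl: "a \<in> Acar n p \<Longrightarrow> leA n p a a"
  using leA_refl0 by (metis prod.collapse)

lemma top_in: "topA n p \<in> Acar n p"
  by (simp add: topA_def Acar_iff) presburger

lemma pow_closed: "a \<in> Acar n p \<Longrightarrow> powA n p a k \<in> Acar n p"
  by (induction k) (simp_all add: top_in odot_closed)

lemma mono:
  assumes "a \<in> Acar n p" "b \<in> Acar n p" "c \<in> Acar n p" "leA n p a b"
  shows "leA n p (odot n p a c) (odot n p b c)"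
  using assms mono0 by (metis prod.collapse)

lemma pow_mono:
  assumes "a \<in> Acar n p" "b \<in> Acar n p" "leA n p a b"
  shows "leA n p (powA n p a k) (powA n p b k)"
proof (induction k)
  case 0
  show ?case using leA_refl[OF top_in] by simp
next
  case (Suc k)
  have pa: "powA n p a k \<in> Acar n p" and pb: "powA n p b k \<in> Acar n p"
    using assms pow_closed by auto
  have 1: "leA n p (odot n p a (powA n p a k)) (odot n p b (powA n p a k))"
    using mono[OF assms(1,2) pa assms(3)] .
  have 2: "leA n p (odot n p (powA n p a k) b) (odot n p (powA n p b k) b)"
    using mono[OF pa pb assms(2) Suc.IH] .
  show ?case
    using leA_trans[OF odot_closed[OF assms(1) pa] odot_closed[OF assms(2) pa] odot_closed[OF assms(2) pb] 1]
      2 odot_comm by (metis powA.simps(2))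
qed

lemma snd_odot: "snd (odot n p a b) =
   (if snd a \<ge> 1 \<and> snd b \<ge> 1 \<and> int p < snd a + snd b then snd a + snd b - int p else 0)"
  by (cases a; cases b) (auto simp: odot_def split: prod.splits)

lemma snd_pow_top:
  assumes "snd a = int p" "p \<ge> 1"
  shows "snd (powA n p a k) = int p"
proof (induction k)
  case 0 then show ?case by (simp add: topA_def)
next
  case (Suc k) then show ?case using assms by (simp add: snd_odot)
qed

lemma snd_pow_inv:
  assumes "0 \<le> snd a" "snd a < int p"
  shows "snd (powA n p a k) = 0 \<or> (1 \<le> snd (powA n p a k) \<and> snd (powA n p a k) \<le> int p - int k)"
proof (induction k)
  case 0
  then show ?case by (cases p) (simp_all add: topA_def)
next
  case (Suc k)
  then show ?case using assms by (auto simp: snd_odot)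
qed

lemma snd_pow_p:
  assumes "0 \<le> snd a" "snd a < int p"
  shows "snd (powA n p a p) = 0"
  using snd_pow_inv[OF assms, of n p] by auto

lemma odot_bot0:
  assumes "((m,r),\<alpha>) \<in> Acar n p"
  shows "odot n p ((m,r),\<alpha>) (botA n p) = botA n p"
proof -
  define N where "N = int n"
  define P where "P = int p"
  show ?thesis
  using assms unfolding botA_def
    apply (cases "\<alpha> = 0")
    apply (simp_all add: P3a P4 Acar_iff flip: N_def P_def)
    apply (smt (z3))+
    done
qed

lemma odot_bot: "a \<in> Acar n p \<Longrightarrow> odot n p a (botA n p) = botA n p"
  using odot_bot0 by (metis prod.collapse)

lemma pow_bot_mono:
  assumes "a \<in> Acar n p" "powA n p a k = botA n p" "k \<le> j"
  shows "powA n p a j = botA n p"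
  using assms(3)
proof (induction j rule: dec_induct)
  case base then show ?case using assms(2) by simp
next
  case (step j) then show ?case using odot_bot[OF assms(1)] by simp
qed

lemma le_bot:
  assumes "x \<in> Acar n p" "leA n p x (botA n p)"
  shows "x = botA n p"
  using assms by (cases x) (auto simp: botA_def Acar_iff)

lemma rad_iff:
  assumes "a \<in> Acar n p" "p \<ge> 1"
  shows "leA n p ((0,0), int p) a \<longleftrightarrow> snd a = int p"
  using assms by (cases a) (auto simp: Acar_iff)


lemma c0_pow1:
  assumes "p \<ge> 2" "k < p"
  shows "powA n p ((int n - 1, 0), int p - 1) k = ((max 0 (int n - int k), 0), int p - int k)"
  using assms(2)
proof (induction k)
  case 0
  then show ?case by (simp add: topA_def)
next
  case (Suc k)
  define N where "N = int n"
  define P where "P = int p"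
  have "1 \<le> int p - 1" "1 \<le> int p - int k" "int p < int p - 1 + (int p - int k)"
    using Suc.prems assms by auto
  then show ?case using Suc
    by (simp add: P1 flip: N_def P_def) (smt (z3))
qed

lemma c0_pow2:
  assumes "p \<ge> 2" "n \<ge> 1"
  shows "powA n p ((int n - 1, 0), int p - 1) (p + j) = ((min (int n) (int p - 1 + int j), 0), 0)"
proof (induction j)
  case 0
  define N where "N = int n"
  define P where "P = int p"
  have e: "p = Suc (p - 1)" using assms by simp
  have h: "powA n p ((int n - 1, 0), int p - 1) (p - 1) = ((max 0 (int n - (int p - 1)), 0), 1)"
    using c0_pow1[OF assms(1), of "p - 1"] assms by (simp add: of_nat_diff)
  have P2': "2 \<le> P" "1 \<le> N" using assms unfolding P_def N_def by auto
  have h2: "int p - int (p - 1) = 1" using assms by simp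
  have "powA n p ((int n - 1, 0), int p - 1) p = odot n p ((int n - 1, 0), int p - 1) (powA n p ((int n - 1, 0), int p - 1) (p - 1))"
    by (subst e) simp
  also have "\<dots> = ((min (int n) (int p - 1), 0), 0)"
    unfolding h using P2'
    by (simp add: P2 flip: N_def P_def)
  finally show ?case by simp
next
  case (Suc j)
  define N where "N = int n"
  define P where "P = int p"
  have "1 \<le> int p - 1" using assms by auto
  then show ?case using Suc
    by (simp add: P3a flip: N_def P_def) (smt (z3))
qed

lemma e0_pow:
  assumes "p \<ge> 1"
  shows "powA n p ((0, 0), 0) (Suc k) = ((min (int n) (int k), 0), 0)"
proof (induction k)
  case 0
  then show ?case using assms by (simp add: topA_def odot_def limp_def padd_def psub_def)
next
  case (Suc k)
  define N where "N = int n"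
  show ?case using Suc
    by (simp add: P4 flip: N_def)
qed

lemma le_c0:
  assumes "a \<in> Acar n p" "snd a \<noteq> int p" "p \<ge> 2"
  shows "leA n p a ((int n - 1, 0), int p - 1)"
proof -
  obtain m r \<alpha> where a: "a = ((m,r),\<alpha>)" by (metis prod.collapse)
  define N where "N = int n"
  define P where "P = int p"
  have "2 \<le> P" using assms unfolding P_def by auto
  then show ?thesis using assms unfolding a
    by (simp add: Acar_iff flip: N_def P_def) (smt (z3))
qed

lemma le_e0:
  assumes "a \<in> Acar n p" "snd a \<noteq> int p" "p = 1"
  shows "leA n p a ((0, 0), 0)"
proof -
  obtain m r \<alpha> where a: "a = ((m,r),\<alpha>)" by (metis prod.collapse)
  define N where "N = int n"
  show ?thesis using assms unfolding a
    by (simp add: Acar_iff flip: N_def)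
qed


definition joinF :: "nat \<Rightarrow> elt \<Rightarrow> elt \<Rightarrow> elt" where
  "joinF n a b = (case a of ((m,r),\<alpha>) \<Rightarrow> case b of ((k,s),\<beta>) \<Rightarrow>
     if \<alpha> \<noteq> 0 \<and> \<beta> \<noteq> 0 then (lmax (m,r) (k,s), max \<alpha> \<beta>)
     else if \<alpha> = 0 \<and> \<beta> = 0 then (lmin (m,r) (k,s), 0)
     else if \<alpha> = 0 then (lmax (k,s) (int n - 1 - m, - r), \<beta>)
     else (lmax (m,r) (int n - 1 - k, - s), \<alpha>))"

lemma joinF_ub0:
  assumes "((m,r),\<alpha>) \<in> Acar n p" "((k,s),\<beta>) \<in> Acar n p"
  shows "joinF n ((m,r),\<alpha>) ((k,s),\<beta>) \<in> Acar n p
       \<and> leA n p ((m,r),\<alpha>) (joinF n ((m,r),\<alpha>) ((k,s),\<beta>))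
       \<and> leA n p ((k,s),\<beta>) (joinF n ((m,r),\<alpha>) ((k,s),\<beta>))"
proof -
  define N where "N = int n"
  define P where "P = int p"
  show ?thesis
  using assms unfolding joinF_def
    apply (cases "\<alpha> = 0"; cases "\<beta> = 0")
    apply (simp_all add: Acar_iff flip: N_def P_def)
    apply (smt (z3))+
    done
qed

lemma joinF_least0:
  assumes "((m,r),\<alpha>) \<in> Acar n p" "((k,s),\<beta>) \<in> Acar n p" "((u,v),\<gamma>) \<in> Acar n p"
    and "leA n p ((m,r),\<alpha>) ((u,v),\<gamma>)" "leA n p ((k,s),\<beta>) ((u,v),\<gamma>)"
  shows "leA n p (joinF n ((m,r),\<alpha>) ((k,s),\<beta>)) ((u,v),\<gamma>)"
proof -
  define N where "N = int n"
  define P where "P = int p"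
  show ?thesis
  using assms unfolding joinF_def
    apply (cases "\<alpha> = 0"; cases "\<beta> = 0")
    apply (simp_all add: Acar_iff flip: N_def P_def)
    apply (smt (z3))+
    done
qed

lemma joinA_eq:
  assumes "a \<in> Acar n p" "b \<in> Acar n p"
  shows "joinA n p a b = joinF n a b"
proof -
  obtain m r \<alpha> k s \<beta> where a: "a = ((m,r),\<alpha>)" and b: "b = ((k,s),\<beta>)" by (metis prod.collapse)
  have ub: "joinF n a b \<in> Acar n p \<and> leA n p a (joinF n a b) \<and> leA n p b (joinF n a b)"
    using joinF_ub0 assms unfolding a b by blast
  have least: "\<forall>d \<in> Acar n p. leA n p a d \<and> leA n p b d \<longrightarrow> leA n p (joinF n a b) d"
  proof (intro ballI impI)
    fix d assume d: "d \<in> Acar n p" "leA n p a d \<and> leA n p b d"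
    obtain u v \<gamma> where dd: "d = ((u,v),\<gamma>)" by (metis prod.collapse)
    show "leA n p (joinF n a b) d" using joinF_least0 assms d unfolding a b dd by blast
  qed
  show ?thesis unfolding joinA_def
  proof (rule the_equality)
    show "joinF n a b \<in> Acar n p \<and> leA n p a (joinF n a b) \<and> leA n p b (joinF n a b) \<and>
      (\<forall>d\<in>Acar n p. leA n p a d \<and> leA n p b d \<longrightarrow> leA n p (joinF n a b) d)"
      using ub least by blast
  next
    fix c assume c: "c \<in> Acar n p \<and> leA n p a c \<and> leA n p b c \<and>
      (\<forall>d\<in>Acar n p. leA n p a d \<and> leA n p b d \<longrightarrow> leA n p c d)"
    show "c = joinF n a b"
      using leA_antisym[of c n p "joinF n a b"] c ub least by blast
  qed
qed

lemma joinA_ub: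
  assumes "a \<in> Acar n p" "b \<in> Acar n p"
  shows "joinA n p a b \<in> Acar n p \<and> leA n p a (joinA n p a b) \<and> leA n p b (joinA n p a b)"
  using joinA_eq[OF assms] joinF_ub0 assms by (metis prod.collapse)


lemma tilde_in0:
  assumes "((m,r),\<alpha>) \<in> Acar n p"
  shows "tildeA n p ((m,r),\<alpha>) \<in> Acar n p"
proof -
  define N where "N = int n"
  define P where "P = int p"
  show ?thesis using assms unfolding tildeA_def
    by (simp add: Acar_iff flip: N_def P_def) (smt (z3))
qed

lemma tilde_in: "a \<in> Acar n p \<Longrightarrow> tildeA n p a \<in> Acar n p"
  using tilde_in0 by (metis prod.collapse)

lemma tilde_snd: "snd (tildeA n p a) = int p - snd a"
  by (cases a) (auto simp: tildeA_def)

lemma rad_in: "((0,0), int p) \<in> Acar n p"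
  by (simp add: Acar_iff) presburger

lemma nonrad_pow_bot:
  assumes "a \<in> Acar n p" "snd a \<noteq> int p" "n \<ge> 1" "p \<ge> 1" "n + 1 \<le> K" "p \<le> K"
  shows "powA n p a K = botA n p"
proof (cases "p = 1")
  case True
  have e: "((0,0),0) \<in> Acar n p" by (simp add: Acar_iff) presburger
  have le: "leA n p a ((0,0),0)" using le_e0[OF assms(1,2) True] .
  have K: "K = Suc (K - 1)" using assms by simp
  have "powA n p ((0,0),0) K = ((min (int n) (int (K - 1)), 0), 0)"
    by (subst K, rule e0_pow) (use assms in simp)
  also have "\<dots> = botA n p" using assms by (simp add: botA_def min_def)
  finally have "powA n p ((0,0),0) K = botA n p" .
  then show ?thesis using pow_mono[OF assms(1) e le, of K] le_bot pow_closed[OF assms(1)] by metis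
next
  case False
  then have p2: "p \<ge> 2" using assms by simp
  have e: "((int n - 1, 0), int p - 1) \<in> Acar n p" using assms p2 by (simp add: Acar_iff) presburger
  have le: "leA n p a ((int n - 1, 0), int p - 1)" using le_c0[OF assms(1,2) p2] .
  have K: "K = p + (K - p)" using assms by simp
  have "powA n p ((int n - 1, 0), int p - 1) K = ((min (int n) (int p - 1 + int (K - p)), 0), 0)"
    by (subst K, rule c0_pow2) (use assms p2 in simp_all)
  also have "\<dots> = botA n p" using assms by (simp add: botA_def min_def of_nat_diff)
  finally have "powA n p ((int n - 1, 0), int p - 1) K = botA n p" .
  then show ?thesis using pow_mono[OF assms(1) e le, of K] le_bot pow_closed[OF assms(1)] by metis
qed

lemma rad_pow_not_bot:
  assumes "snd a = int p" "p \<ge> 1"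
  shows "powA n p a K \<noteq> botA n p"
  using snd_pow_top[OF assms, of n K] assms by (auto simp: botA_def)

lemma partA:
  assumes "a \<in> Acar n p" "p \<ge> 1"
  shows "leA n p ((0,0), int p) (joinA n p a (tildeA n p (powA n p a p)))"
proof -
  have pa: "powA n p a p \<in> Acar n p" using pow_closed[OF assms(1)] .
  have b: "tildeA n p (powA n p a p) \<in> Acar n p" using tilde_in[OF pa] .
  have J: "joinA n p a (tildeA n p (powA n p a p)) \<in> Acar n p
        \<and> leA n p a (joinA n p a (tildeA n p (powA n p a p)))
        \<and> leA n p (tildeA n p (powA n p a p)) (joinA n p a (tildeA n p (powA n p a p)))"
    using joinA_ub[OF assms(1) b] .
  show ?thesis
  proof (cases "snd a = int p")
    case True
    then have "leA n p ((0,0), int p) a" using rad_iff[OF assms] by simp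
    then show ?thesis using leA_trans[OF rad_in assms(1)] J by blast
  next
    case False
    have s: "0 \<le> snd a" "snd a < int p" using assms(1) False
      by (cases a; auto simp: Acar_iff)+
    have "snd (tildeA n p (powA n p a p)) = int p"
      using snd_pow_p[OF s, of n] tilde_snd by simp
    then have "leA n p ((0,0), int p) (tildeA n p (powA n p a p))" using rad_iff[OF b assms(2)] by simp
    then show ?thesis using leA_trans[OF rad_in b] J by blast
  qed
qed

theorem theorem3p4:
  fixes n p :: nat
  assumes "n \<ge> 1" and "p \<ge> 1"
  shows "(\<forall>a \<in> Acar n p. leA n p ((0,0), int p) (joinA n p a (tildeA n p (powA n p a p))))
       \<and> (p \<le> n \<longrightarrow> (\<forall>a \<in> Acar n p.
             \<not> leA n p ((0,0), int p) a \<longleftrightarrow> powA n p a (n + 1) = botA n p))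
       \<and> (n < p \<longrightarrow>
             powA n p ((int n - 1, 0), int p - 1) (p - 1) = tildeA n p ((int n - 1, 0), int p - 1)
           \<and> (\<forall>a \<in> Acar n p. \<not> leA n p ((0,0), int p) a \<longleftrightarrow> powA n p a p = botA n p))"
proof (intro conjI impI ballI)
  fix a assume "a \<in> Acar n p"
  then show "leA n p ((0,0), int p) (joinA n p a (tildeA n p (powA n p a p)))"
    using partA assms by blast
next
  fix a assume pn: "p \<le> n" and a: "a \<in> Acar n p"
  show "\<not> leA n p ((0,0), int p) a \<longleftrightarrow> powA n p a (n + 1) = botA n p"
    using rad_iff[OF a assms(2)] nonrad_pow_bot[OF a _ assms, of "n+1"] pn
      rad_pow_not_bot[of a p n "n+1"] assms by auto
next
  assume np: "n < p"
  then have p2: "p \<ge> 2" using assms by simp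
  have "powA n p ((int n - 1, 0), int p - 1) (p - 1) = ((max 0 (int n - int (p - 1)), 0), int p - int (p - 1))"
    using c0_pow1[OF p2, of "p - 1"] p2 by simp
  also have "\<dots> = ((0,0),1)" using np p2 by (simp add: of_nat_diff)
  also have "\<dots> = tildeA n p ((int n - 1, 0), int p - 1)" using p2 by (simp add: tildeA_def)
  finally show "powA n p ((int n - 1, 0), int p - 1) (p - 1) = tildeA n p ((int n - 1, 0), int p - 1)" .
next
  fix a assume np: "n < p" and a: "a \<in> Acar n p"
  show "\<not> leA n p ((0,0), int p) a \<longleftrightarrow> powA n p a p = botA n p"
    using rad_iff[OF a assms(2)] nonrad_pow_bot[OF a _ assms, of "p"] np
      rad_pow_not_bot[of a p n p] assms by auto
qed

end
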